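(* Let $G$ be a finite group with irreducible complex characters $\varphi_1,\dots,\varphi_t$, and let $Q$ be a quasigroup of order $|G|$. Then $Q$ is a balanced cover of the weighted character quasigroup of $G$ if and only if there exist pairwise disjoint subsets $S_1,\dots,S_t\subseteq Q$ with $|S_i|=\varphi_i(1)^2$ for each $i$ and $$S_i\cdot S_j=\sum_{k=1}^t\frac{\varphi_i(1)\varphi_j(1)\langle\varphi_i\cdot\varphi_j\mid\varphi_k\rangle}{\varphi_k(1)}\,S_k\qquad\text{for all }1\le i,j\le t.$$
   Context: The scalar product is $\langle\theta\mid\varphi\rangle=\frac{1}{|G|}\sum_{g\in G}\theta(g)\overline{\varphi(g)}$. The weighted character quasigroup of $G$ consists of the set $\{\varphi_1,\dots,\varphi_t\}$ with weights $w(\varphi_i)=\varphi_i(1)^2$ and multiplication function $\alpha(\varphi_i,\varphi_j,\varphi_k)=\varphi_i(1)\varphi_j(1)\varphi_k(1)\langle\varphi_i\varphi_j\mid\varphi_k\rangle$. A quasigroup $Q$ of order $|G|$ covers it if there is a surjection $f:Q\to\{\varphi_1,\dots,\varphi_t\}$ with $|f^{-1}\{\varphi_i\}|=\varphi_i(1)^2$ and $|\{(a,b)\in f^{-1}\{\varphi_i\}\times f^{-1}\{\varphi_j\} : f(ab)=\varphi_k\}|=\alpha(\varphi_i,\varphi_j,\varphi_k)$ for all $i,j,k$. The cover is balanced if, for all $i,j$ and all $q\in Q$, the number $m_q$ of pairs $(a,b)\in f^{-1}\{\varphi_i\}\times f^{-1}\{\varphi_j\}$ with $ab=q$ depends only on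 $f(q)$. For subsets (or multisubsets) $A,B$ of $Q$, $A\cdot B$ denotes the formal sum $\sum_{a\in A,b\in B}ab$ in the free $\mathbb{N}$-semimodule $\mathbb{N}Q$ on $Q$ (so it records multiplicities), and a subset $S$ is identified with $\sum_{q\in S}q$. *)

theory Defs
  imports "HOL-Algebra.Group" "Jordan_Normal_Form.Matrix"
begin

definition mat_trace :: "complex mat \<Rightarrow> complex" where
  "mat_trace A = (\<Sum>i<dim_row A. A $$ (i,i))"

definition is_rep :: "('a, 'b) monoid_scheme \<Rightarrow> nat \<Rightarrow> ('a \<Rightarrow> complex mat) \<Rightarrow> bool" where
  "is_rep G n \<rho> \<longleftrightarrow>
     (\<forall>g\<in>carrier G. \<rho> g \<in> carrier_mat n n) \<and>
     \<rho> \<one>\<^bsub>G\<^esub> = 1\<^sub>m n \<and>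
     (\<forall>g\<in>carrier G. \<forall>h\<in>carrier G. \<rho> (g \<otimes>\<^bsub>G\<^esub> h) = \<rho> g * \<rho> h)"

definition is_subspace :: "nat \<Rightarrow> complex vec set \<Rightarrow> bool" where
  "is_subspace n W \<longleftrightarrow> W \<subseteq> carrier_vec n \<and> 0\<^sub>v n \<in> W \<and>
     (\<forall>v\<in>W. \<forall>w\<in>W. v + w \<in> W) \<and> (\<forall>c. \<forall>v\<in>W. c \<cdot>\<^sub>v v \<in> W)"

definition irreducible_rep :: "('a, 'b) monoid_scheme \<Rightarrow> nat \<Rightarrow> ('a \<Rightarrow> complex mat) \<Rightarrow> bool" where
  "irreducible_rep G n \<rho> \<longleftrightarrow> is_rep G n \<rho> \<and> n > 0 \<and>
     (\<forall>W. is_subspace n W \<and> (\<forall>g\<in>carrier G. \<forall>w\<in>W. \<rho> g *\<^sub>v w \<in> W)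
          \<longrightarrow> W = {0\<^sub>v n} \<or> W = carrier_vec n)"

definition character_of :: "('a, 'b) monoid_scheme \<Rightarrow> ('a \<Rightarrow> complex mat) \<Rightarrow> 'a \<Rightarrow> complex" where
  "character_of G \<rho> = (\<lambda>g. if g \<in> carrier G then mat_trace (\<rho> g) else 0)"

definition irr_char :: "('a, 'b) monoid_scheme \<Rightarrow> ('a \<Rightarrow> complex) \<Rightarrow> bool" where
  "irr_char G \<chi> \<longleftrightarrow> (\<exists>n \<rho>. irreducible_rep G n \<rho> \<and> \<chi> = character_of G \<rho>)"

definition enumerates_irr_chars :: "('a, 'b) monoid_scheme \<Rightarrow> nat \<Rightarrow> (nat \<Rightarrow> 'a \<Rightarrow> complex) \<Rightarrow> bool" where
  "enumerates_irr_chars G t \<phi> \<longleftrightarrow> inj_on \<phi> {..<t} \<and> \<phi> ` {..<t} = {\<chi>. irr_char G \<chi>}"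

definition char_scalar :: "('a, 'b) monoid_scheme \<Rightarrow> ('a \<Rightarrow> complex) \<Rightarrow> ('a \<Rightarrow> complex) \<Rightarrow> complex" where
  "char_scalar G \<theta> \<psi> = (1 / of_nat (card (carrier G))) * (\<Sum>g\<in>carrier G. \<theta> g * cnj (\<psi> g))"

definition wcq_weight :: "('a, 'b) monoid_scheme \<Rightarrow> ('a \<Rightarrow> complex) \<Rightarrow> complex" where
  "wcq_weight G \<chi> = (\<chi> \<one>\<^bsub>G\<^esub>)\<^sup>2"

definition wcq_alpha :: "('a, 'b) monoid_scheme \<Rightarrow> ('a \<Rightarrow> complex) \<Rightarrow> ('a \<Rightarrow> complex) \<Rightarrow> ('a \<Rightarrow> complex) \<Rightarrow> complex" where
  "wcq_alpha G \<chi> \<psi> \<eta> = \<chi> \<one>\<^bsub>G\<^esub> * \<psi> \<one>\<^bsub>G\<^esub> * \<eta> \<one>\<^bsub>G\<^esub> *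
      char_scalar G (\<lambda>g. \<chi> g * \<psi> g) \<eta>"

definition quasigroup :: "'q set \<Rightarrow> ('q \<Rightarrow> 'q \<Rightarrow> 'q) \<Rightarrow> bool" where
  "quasigroup Q m \<longleftrightarrow> (\<forall>a\<in>Q. \<forall>b\<in>Q. m a b \<in> Q) \<and>
     (\<forall>a\<in>Q. \<forall>b\<in>Q. \<exists>!x. x \<in> Q \<and> m a x = b) \<and>
     (\<forall>a\<in>Q. \<forall>b\<in>Q. \<exists>!y. y \<in> Q \<and> m y a = b)"

definition wcq_cover ::
  "('a, 'b) monoid_scheme \<Rightarrow> nat \<Rightarrow> (nat \<Rightarrow> 'a \<Rightarrow> complex) \<Rightarrow> 'q set \<Rightarrow> ('q \<Rightarrow> 'q \<Rightarrow> 'q)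
     \<Rightarrow> ('q \<Rightarrow> 'a \<Rightarrow> complex) \<Rightarrow> bool" where
  "wcq_cover G t \<phi> Q m f \<longleftrightarrow>
     f ` Q = \<phi> ` {..<t} \<and>
     (\<forall>i<t. of_nat (card {q\<in>Q. f q = \<phi> i}) = wcq_weight G (\<phi> i)) \<and>
     (\<forall>i<t. \<forall>j<t. \<forall>k<t.
        of_nat (card {(a,b) \<in> {q\<in>Q. f q = \<phi> i} \<times> {q\<in>Q. f q = \<phi> j}. f (m a b) = \<phi> k})
          = wcq_alpha G (\<phi> i) (\<phi> j) (\<phi> k))"

definition wcq_balanced_cover ::
  "('a, 'b) monoid_scheme \<Rightarrow> nat \<Rightarrow> (nat \<Rightarrow> 'a \<Rightarrow> complex) \<Rightarrow> 'q set \<Rightarrow> ('q \<Rightarrow> 'q \<Rightarrow> 'q)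
     \<Rightarrow> ('q \<Rightarrow> 'a \<Rightarrow> complex) \<Rightarrow> bool" where
  "wcq_balanced_cover G t \<phi> Q m f \<longleftrightarrow> wcq_cover G t \<phi> Q m f \<and>
     (\<forall>i<t. \<forall>j<t. \<forall>q\<in>Q. \<forall>q'\<in>Q. f q = f q' \<longrightarrow>
        card {(a,b) \<in> {x\<in>Q. f x = \<phi> i} \<times> {x\<in>Q. f x = \<phi> j}. m a b = q}
        = card {(a,b) \<in> {x\<in>Q. f x = \<phi> i} \<times> {x\<in>Q. f x = \<phi> j}. m a b = q'})"

text \<open>Multiplicity of q in the formal sum A . B in NQ.\<close>
definition prod_mult :: "('q \<Rightarrow> 'q \<Rightarrow> 'q) \<Rightarrow> 'q set \<Rightarrow> 'q set \<Rightarrow> 'q \<Rightarrow> nat" where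
  "prod_mult m A B q = card {(a,b) \<in> A \<times> B. m a b = q}"

end

theory Submission
  imports Defs "Jordan_Normal_Form.VS_Connect" "Jordan_Normal_Form.Determinant"
begin

context vec_space begin

lemma subspace_basis_list:
  assumes sub: "submodule class_ring W V"
    and W0: "W \<noteq> {0\<^sub>v n}" and Wn: "W \<noteq> carrier_vec n"
  shows "\<exists>ws k. length ws = n \<and> set ws \<subseteq> carrier_vec n \<and> 0 < k \<and> k < n \<and>
           span (set ws) = carrier_vec n \<and> span (set (take k ws)) = W"
proof -
  have Wc: "W \<subseteq> carrier_vec n" using sub unfolding submodule_def by auto
  let ?P = "\<lambda>S. S \<subseteq> W \<and> lin_indpt S"
  have bnd: "\<And>S. ?P S \<Longrightarrow> finite S \<and> card S \<le> n"
    using li_le_dim[OF fin_dim] Wc dim_is_n by fastforce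
  have P0: "?P {}" unfolding lin_dep_def by auto
  obtain A where fA: "finite A" and mA: "maximal A ?P"
    using maximal_exists[of ?P, OF bnd P0] by blast
  have AW: "A \<subseteq> W" and liA: "lin_indpt A" using mA unfolding maximal_def by auto
  have Ac: "A \<subseteq> carrier_vec n" using AW Wc by auto
  have spA: "span A = W"
  proof
    show "span A \<subseteq> W" using span_is_subset[OF AW sub] .
    show "W \<subseteq> span A"
    proof
      fix v assume vW: "v \<in> W"
      show "v \<in> span A"
      proof (rule ccontr)
        assume nv: "v \<notin> span A"
        have vA: "v \<notin> A" using nv in_own_span[OF Ac] by auto
        have vc: "v \<in> carrier_vec n" using vW Wc by auto
        have "\<not> lin_dep (A \<union> {v})" using lin_dep_iff_in_span[OF _ liA _ vA] Ac vc nv by auto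
        hence "?P (A \<union> {v})" using AW vW by auto
        hence "A \<union> {v} = A" using mA unfolding maximal_def by blast
        thus False using vA by auto
      qed
    qed
  qed
  have An: "A \<noteq> {}" using spA W0 span_empty by auto
  have cAle: "card A \<le> n" using bnd AW liA by blast
  have cAlt: "card A < n"
  proof (rule ccontr)
    assume "\<not> card A < n"
    hence "basis A" using dim_li_is_basis[OF fin_dim fA _ liA] Ac dim_is_n by auto
    hence "span A = carrier_vec n" unfolding basis_def by auto
    thus False using spA Wn by auto
  qed
  have A_sp: "A \<subseteq> span (set (unit_vecs n))" using span_unit_vecs_is_carrier Ac by auto
  have Uc: "set (unit_vecs n) \<subseteq> carrier_vec n" unfolding unit_vecs_def by auto
  from replacement[OF fA finite_set[of "unit_vecs n"] Uc liA A_sp]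
  obtain C where C: "finite C \<and> C\<subseteq>carrier_vec n \<and> C\<subseteq>span (set (unit_vecs n)) \<and> C\<inter>A={} \<and> int (card C) \<le> (int (card (set (unit_vecs n :: 'a vec list)))) - (int (card A)) \<and> (span (A \<union> C) = span (set (unit_vecs n)))" ..
  have fC: "finite C" and Cc: "C \<subseteq> carrier_vec n" and CA: "C \<inter> A = {}"
    and cC: "int (card C) \<le> int (card (set (unit_vecs n :: 'a vec list))) - int (card A)"
    and spAC: "span (A \<union> C) = span (set (unit_vecs n))" using C by simp_all
  have cU: "card (set (unit_vecs n :: 'a vec list)) = n" using distinct_card[OF unit_vecs_distinct] by simp
  obtain la where la: "set la = A" "distinct la" using finite_distinct_list[OF fA] by (elim exE conjE)
  obtain lc where lc: "set lc = C" "distinct lc" using finite_distinct_list[OF fC] by blast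
  have lla: "length la = card A" using distinct_card[OF la(2)] la(1) by simp
  have llc: "length lc = card C" using distinct_card[OF lc(2)] lc(1) by simp
  define ws where "ws = la @ lc @ replicate (n - card A - card C) (0\<^sub>v n)"
  have lws: "length ws = n" using cC cU lla llc unfolding ws_def by auto
  have wsc: "set ws \<subseteq> carrier_vec n" unfolding ws_def using la lc Ac Cc by auto
  have tk: "take (card A) ws = la" unfolding ws_def using lla by simp
  have "span (A \<union> C) \<subseteq> span (set ws)"
    by (rule span_is_monotone) (auto simp: ws_def la lc)
  hence "span (set ws) = carrier_vec n"
    using spAC span_unit_vecs_is_carrier span_is_subset2[OF wsc] by auto
  thus ?thesis using lws wsc tk la spA An cAlt fA
    by (intro exI[of _ ws] exI[of _ "card A"]) (auto simp: card_gt_0_iff)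
qed

end

lemma mat_trace_mult_comm:
  assumes "A \<in> carrier_mat n m" "B \<in> carrier_mat m n"
  shows "mat_trace (A * B) = mat_trace (B * A)"
proof -
  have "mat_trace (A * B) = (\<Sum>i<n. \<Sum>j<m. A $$ (i,j) * B $$ (j,i))"
    using assms unfolding mat_trace_def
    by (auto simp: scalar_prod_def lessThan_atLeast0 intro!: sum.cong)
  also have "\<dots> = (\<Sum>j<m. \<Sum>i<n. B $$ (j,i) * A $$ (i,j))"
    by (subst sum.swap) (simp add: mult.commute)
  also have "\<dots> = mat_trace (B * A)"
    using assms unfolding mat_trace_def
    by (auto simp: scalar_prod_def lessThan_atLeast0 intro!: sum.cong)
  finally show ?thesis .
qed

lemma block_reps:
  fixes G :: "('a, 'b) monoid_scheme" and M :: "'a \<Rightarrow> complex mat"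
  assumes car: "\<And>g. g \<in> carrier G \<Longrightarrow> M g \<in> carrier_mat n n"
    and one: "M \<one>\<^bsub>G\<^esub> = 1\<^sub>m n"
    and mul: "\<And>g h. g \<in> carrier G \<Longrightarrow> h \<in> carrier G \<Longrightarrow> M (g \<otimes>\<^bsub>G\<^esub> h) = M g * M h"
    and blk: "\<And>g a b. g \<in> carrier G \<Longrightarrow> k \<le> a \<Longrightarrow> a < n \<Longrightarrow> b < k \<Longrightarrow> M g $$ (a,b) = 0"
    and kn: "k \<le> n"
  shows "is_rep G k (\<lambda>g. mat k k (\<lambda>(a,b). M g $$ (a,b)))"
    and "is_rep G (n-k) (\<lambda>g. mat (n-k) (n-k) (\<lambda>(a,b). M g $$ (a+k,b+k)))"
    and "\<And>g. g \<in> carrier G \<Longrightarrow> mat_trace (M g) = mat_trace (mat k k (\<lambda>(a,b). M g $$ (a,b)))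
            + mat_trace (mat (n-k) (n-k) (\<lambda>(a,b). M g $$ (a+k,b+k)))"
proof -
  have prod: "(M g * M h) $$ (a,b) = (\<Sum>c<n. M g $$ (a,c) * M h $$ (c,b))"
    if "g \<in> carrier G" "h \<in> carrier G" "a < n" "b < n" for g h a b
    using car[OF that(1)] car[OF that(2)] that(3,4)
    by (auto simp: scalar_prod_def lessThan_atLeast0 intro!: sum.cong)
  have split: "(\<Sum>c<n. f c) = (\<Sum>c<k. f c) + (\<Sum>c<n-k. f (c+k))" for f :: "nat \<Rightarrow> complex"
  proof -
    have "(\<Sum>c<n. f c) = (\<Sum>c\<in>{0..<k}. f c) + (\<Sum>c\<in>{k..<n}. f c)"
      using kn by (simp add: lessThan_atLeast0 sum.atLeastLessThan_concat)
    also have "(\<Sum>c\<in>{k..<n}. f c) = (\<Sum>c\<in>{0..<n-k}. f (c+k))"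
      using sum.shift_bounds_nat_ivl[of f 0 k "n-k"] kn by simp
    finally show ?thesis by (simp add: lessThan_atLeast0)
  qed
  show "is_rep G k (\<lambda>g. mat k k (\<lambda>(a,b). M g $$ (a,b)))"
    unfolding is_rep_def
  proof (intro conjI ballI)
    show "mat k k (\<lambda>(a,b). M \<one>\<^bsub>G\<^esub> $$ (a,b)) = 1\<^sub>m k"
      using kn by (intro eq_matI) (auto simp: one)
  next
    fix g h assume g: "g \<in> carrier G" and h: "h \<in> carrier G"
    show "mat k k (\<lambda>(a,b). M (g \<otimes>\<^bsub>G\<^esub> h) $$ (a,b)) =
          mat k k (\<lambda>(a,b). M g $$ (a,b)) * mat k k (\<lambda>(a,b). M h $$ (a,b))"
    proof (intro eq_matI)
      fix a b assume a: "a < dim_row (mat k k (\<lambda>(a,b). M g $$ (a,b)) * mat k k (\<lambda>(a,b). M h $$ (a,b)))"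
        and b: "b < dim_col (mat k k (\<lambda>(a,b). M g $$ (a,b)) * mat k k (\<lambda>(a,b). M h $$ (a,b)))"
      hence a: "a < k" and b: "b < k" by auto
      have "M (g \<otimes>\<^bsub>G\<^esub> h) $$ (a,b) = (\<Sum>c<n. M g $$ (a,c) * M h $$ (c,b))"
        using mul[OF g h] prod[OF g h] a b kn by auto
      also have "\<dots> = (\<Sum>c<k. M g $$ (a,c) * M h $$ (c,b))"
        using blk[OF h] b by (subst split) simp
      finally show "mat k k (\<lambda>(a,b). M (g \<otimes>\<^bsub>G\<^esub> h) $$ (a,b)) $$ (a,b) =
          (mat k k (\<lambda>(a,b). M g $$ (a,b)) * mat k k (\<lambda>(a,b). M h $$ (a,b))) $$ (a,b)"
        using a b by (auto simp: scalar_prod_def lessThan_atLeast0 intro!: sum.cong)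
    qed auto
  qed auto
  show "is_rep G (n-k) (\<lambda>g. mat (n-k) (n-k) (\<lambda>(a,b). M g $$ (a+k,b+k)))"
    unfolding is_rep_def
  proof (intro conjI ballI)
    show "mat (n-k) (n-k) (\<lambda>(a,b). M \<one>\<^bsub>G\<^esub> $$ (a+k,b+k)) = 1\<^sub>m (n-k)"
      using kn by (intro eq_matI) (auto simp: one)
  next
    fix g h assume g: "g \<in> carrier G" and h: "h \<in> carrier G"
    let ?C = "\<lambda>g. mat (n-k) (n-k) (\<lambda>(a,b). M g $$ (a+k,b+k))"
    show "?C (g \<otimes>\<^bsub>G\<^esub> h) = ?C g * ?C h"
    proof (intro eq_matI)
      fix a b assume a: "a < dim_row (?C g * ?C h)" and b: "b < dim_col (?C g * ?C h)"
      hence a: "a < n-k" and b: "b < n-k" by auto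
      have "M (g \<otimes>\<^bsub>G\<^esub> h) $$ (a+k,b+k) = (\<Sum>c<n. M g $$ (a+k,c) * M h $$ (c,b+k))"
        using mul[OF g h] prod[OF g h] a b kn by auto
      also have "\<dots> = (\<Sum>c<n-k. M g $$ (a+k,c+k) * M h $$ (c+k,b+k))"
        using blk[OF g] a by (subst split) simp
      finally show "?C (g \<otimes>\<^bsub>G\<^esub> h) $$ (a,b) = (?C g * ?C h) $$ (a,b)"
        using a b by (auto simp: scalar_prod_def lessThan_atLeast0 intro!: sum.cong)
    qed auto
  qed auto
  fix g assume g: "g \<in> carrier G"
  show "mat_trace (M g) = mat_trace (mat k k (\<lambda>(a,b). M g $$ (a,b)))
            + mat_trace (mat (n-k) (n-k) (\<lambda>(a,b). M g $$ (a+k,b+k)))"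
    using car[OF g] kn unfolding mat_trace_def by (simp add: split[of "\<lambda>i. M g $$ (i,i)"])
qed

context vec_space begin
lemma span_as_mat:
  assumes "set us \<subseteq> carrier_vec n" "v \<in> span (set us)"
  shows "\<exists>c. v = mat_of_cols n us *\<^sub>v vec (length us) c"
proof -
  have "v \<in> span_list us" using span_list_as_span[OF assms(1)] assms(2) by simp
  then obtain c where "v = lincomb_list c us" by (auto elim: in_span_listE)
  moreover have "\<forall>w\<in>set us. dim_vec w = n" using assms(1) by auto
  ultimately show ?thesis using lincomb_list_as_mat_mult by blast
qed
end


lemma rep_split:
  fixes G :: "('a, 'b) monoid_scheme" and \<pi> :: "'a \<Rightarrow> complex mat"
  assumes rep: "is_rep G n \<pi>" and sub: "is_subspace n W"
    and inv: "\<forall>g\<in>carrier G. \<forall>w\<in>W. \<pi> g *\<^sub>v w \<in> W"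
    and W0: "W \<noteq> {0\<^sub>v n}" and Wn: "W \<noteq> carrier_vec n"
  shows "\<exists>k A C. 0 < k \<and> k < n \<and> is_rep G k A \<and> is_rep G (n-k) C \<and>
           (\<forall>g\<in>carrier G. mat_trace (\<pi> g) = mat_trace (A g) + mat_trace (C g))"
proof -
  interpret V: vec_space "TYPE(complex)" n .
  have subm: "submodule class_ring W V.V"
  proof -
    have m: "module class_ring V.V" by (rule vec_module)
    have Wc: "W \<subseteq> carrier_vec n" and z: "0\<^sub>v n \<in> W" and ad: "\<And>v w. v \<in> W \<Longrightarrow> w \<in> W \<Longrightarrow> v + w \<in> W"
      and sm: "\<And>c v. v \<in> W \<Longrightarrow> c \<cdot>\<^sub>v v \<in> W"
      using sub unfolding is_subspace_def by auto
    show ?thesis unfolding submodule_def using m Wc z ad sm by simp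
  qed
  obtain ws k where lws: "length ws = n" and wsc: "set ws \<subseteq> carrier_vec n" and k0: "0 < k"
    and kn: "k < n" and spws: "V.span (set ws) = carrier_vec n"
    and spk: "V.span (set (take k ws)) = W"
    using V.subspace_basis_list[OF subm W0 Wn] by blast
  define T where "T = mat_of_cols n ws"
  have Tc: "T \<in> carrier_mat n n" unfolding T_def using lws by auto
  have "\<forall>j<n. \<exists>c. unit_vec n j = T *\<^sub>v vec n c"
  proof (intro allI impI)
    fix j assume "j < n"
    hence "unit_vec n j \<in> V.span (set ws)" using spws by auto
    thus "\<exists>c. unit_vec n j = T *\<^sub>v vec n c" using V.span_as_mat[OF wsc] lws T_def by auto
  qed
  then obtain cf where cf: "\<And>j. j < n \<Longrightarrow> unit_vec n j = T *\<^sub>v vec n (cf j)" by metis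
  define S where "S = mat n n (\<lambda>(a,j). cf j a)"
  have Sc: "S \<in> carrier_mat n n" unfolding S_def by auto
  have colS: "col S j = vec n (cf j)" if "j < n" for j
    using that unfolding S_def by (auto simp: col_def)
  have TS: "T * S = 1\<^sub>m n"
  proof (intro eq_matI)
    fix i j assume i: "i < dim_row (1\<^sub>m n)" and j: "j < dim_col (1\<^sub>m n)"
    have "(T * S) $$ (i,j) = (T *\<^sub>v col S j) $ i" using i j Tc Sc by auto
    also have "\<dots> = unit_vec n j $ i" using cf[of j] colS[of j] j by auto
    finally show "(T * S) $$ (i,j) = 1\<^sub>m n $$ (i,j)" using i j by auto
  qed (use Tc Sc in auto)
  have ST: "S * T = 1\<^sub>m n" using mat_mult_left_right_inverse[OF Tc Sc TS] .
  define M where "M = (\<lambda>g. S * \<pi> g * T)"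
  have pic: "\<pi> g \<in> carrier_mat n n" if "g \<in> carrier G" for g using rep that unfolding is_rep_def by auto
  have Mc: "M g \<in> carrier_mat n n" if "g \<in> carrier G" for g
    unfolding M_def using pic[OF that] Sc Tc by auto
  have M1: "M \<one>\<^bsub>G\<^esub> = 1\<^sub>m n" using rep ST Sc unfolding M_def is_rep_def by auto
  have Mmul: "M (g \<otimes>\<^bsub>G\<^esub> h) = M g * M h" if g: "g \<in> carrier G" and h: "h \<in> carrier G" for g h
  proof -
    have "M (g \<otimes>\<^bsub>G\<^esub> h) = S * (\<pi> g * \<pi> h) * T" using rep g h unfolding M_def is_rep_def by auto
    also have "\<dots> = S * (\<pi> g * (T * S) * \<pi> h) * T" using TS pic[OF g] pic[OF h] by simp
    also have "\<dots> = M g * M h" unfolding M_def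
      using pic[OF g] pic[OF h] Sc Tc by (simp add: assoc_mult_mat[of _ n n _ n _ n])
    finally show ?thesis .
  qed
  have blk: "M g $$ (a,b) = 0" if g: "g \<in> carrier G" and a: "k \<le> a" "a < n" and b: "b < k" for g a b
  proof -
    have bn: "b < n" using b kn by auto
    have wb: "ws ! b \<in> W"
    proof -
      have "take k ws ! b = ws ! b" using b by simp
      moreover have "b < length (take k ws)" using b kn lws by simp
      ultimately have "ws ! b \<in> set (take k ws)" by (metis nth_mem)
      moreover have "set (take k ws) \<subseteq> carrier_vec n" using wsc set_take_subset by (metis subset_trans)
      ultimately show ?thesis using spk V.in_own_span[of "set (take k ws)"] by auto
    qed
    have "\<pi> g *\<^sub>v ws ! b \<in> W" using inv g wb by auto
    hence insp: "\<pi> g *\<^sub>v ws ! b \<in> V.span (set (take k ws))" using spk by simp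
    have tkc: "set (take k ws) \<subseteq> carrier_vec n" using wsc set_take_subset by (metis subset_trans)
    from V.span_as_mat[OF tkc insp]
    obtain c where c: "\<pi> g *\<^sub>v ws ! b = mat_of_cols n (take k ws) *\<^sub>v vec (length (take k ws)) c" ..
    define c' where "c' = vec n (\<lambda>i. if i < k then c i else 0)"
    have c'c: "c' \<in> carrier_vec n" unfolding c'_def by auto
    have eq: "\<pi> g *\<^sub>v ws ! b = T *\<^sub>v c'"
    proof (intro eq_vecI)
      fix r assume "r < dim_vec (T *\<^sub>v c')"
      hence r: "r < n" using Tc by auto
      have "(mat_of_cols n (take k ws) *\<^sub>v vec (length (take k ws)) c) $ r = (\<Sum>i<k. ws ! i $ r * c i)"
        using r kn lws by (auto simp: scalar_prod_def lessThan_atLeast0 mat_of_cols_index intro!: sum.cong)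
      also have "\<dots> = (\<Sum>i<n. ws ! i $ r * c' $ i)"
        using kn by (intro sum.mono_neutral_cong_left) (auto simp: c'_def)
      also have "\<dots> = (T *\<^sub>v c') $ r"
        using r Tc lws by (auto simp: T_def scalar_prod_def lessThan_atLeast0 mat_of_cols_index c'_def intro!: sum.cong)
      finally show "(\<pi> g *\<^sub>v ws ! b) $ r = (T *\<^sub>v c') $ r" using c by simp
    qed (use Tc pic[OF g] in auto)
    have colT: "col T b = ws ! b" unfolding T_def using bn lws wsc by (auto intro!: col_mat_of_cols)
    have "M g $$ (a,b) = (S * (\<pi> g * T)) $$ (a,b)" unfolding M_def using Sc Tc pic[OF g] by simp
    also have "\<dots> = (S *\<^sub>v col (\<pi> g * T) b) $ a" using a bn Sc Tc pic[OF g] by auto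
    also have "col (\<pi> g * T) b = \<pi> g *\<^sub>v ws ! b" using colT bn Tc pic[OF g] by (simp add: mult_mat_vec_def)
    also have "S *\<^sub>v (\<pi> g *\<^sub>v ws ! b) = c'" using eq ST Sc Tc c'c
      by (metis assoc_mult_mat_vec one_mult_mat_vec)
    finally show ?thesis using a unfolding c'_def by simp
  qed
  have kn': "k \<le> n" using kn by simp
  have BR1: "is_rep G k (\<lambda>g. mat k k (\<lambda>(a,b). M g $$ (a,b)))"
    by (rule block_reps(1)[of G M n k]) (use Mc M1 Mmul blk kn' in auto)
  have BR2: "is_rep G (n-k) (\<lambda>g. mat (n-k) (n-k) (\<lambda>(a,b). M g $$ (a+k,b+k)))"
    by (rule block_reps(2)[of G M n k]) (use Mc M1 Mmul blk kn' in auto)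
  have BR3: "mat_trace (M g) = mat_trace (mat k k (\<lambda>(a,b). M g $$ (a,b)))
            + mat_trace (mat (n-k) (n-k) (\<lambda>(a,b). M g $$ (a+k,b+k)))" if g: "g \<in> carrier G" for g
    by (rule block_reps(3)[of G M n k]) (use Mc M1 Mmul blk kn' g in auto)
  have tr: "mat_trace (\<pi> g) = mat_trace (M g)" if g: "g \<in> carrier G" for g
  proof -
    have TSX: "T * (S * X) = X" if "X \<in> carrier_mat n m" for X m
      using that Tc Sc TS by (metis assoc_mult_mat left_mult_one_mat)
    have "\<pi> g = T * M g * S" unfolding M_def using pic[OF g] Sc Tc TS
      by (simp add: assoc_mult_mat[of _ n n _ n _ n] TSX[of "\<pi> g" n])
    hence "mat_trace (\<pi> g) = mat_trace (T * (M g * S))" using Tc Mc[OF g] Sc by simp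
    also have "\<dots> = mat_trace ((M g * S) * T)" using Tc Mc[OF g] Sc by (intro mat_trace_mult_comm) auto
    also have "\<dots> = mat_trace (M g)" using ST Tc Mc[OF g] Sc by simp
    finally show ?thesis .
  qed
  show ?thesis using BR1 BR2 BR3 tr k0 kn
    by (intro exI[of _ k] exI[of _ "\<lambda>g. mat k k (\<lambda>(a,b). M g $$ (a,b))"]
        exI[of _ "\<lambda>g. mat (n-k) (n-k) (\<lambda>(a,b). M g $$ (a+k,b+k))"] conjI) auto
qed


lemma char_sum_zero:
  fixes G :: "('a, 'b) monoid_scheme" and h :: "'a \<Rightarrow> complex"
  assumes irr: "\<And>n \<sigma>. irreducible_rep G n \<sigma> \<Longrightarrow> (\<Sum>x\<in>carrier G. h x * mat_trace (\<sigma> x)) = 0"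
  shows "is_rep G n \<pi> \<Longrightarrow> (\<Sum>x\<in>carrier G. h x * mat_trace (\<pi> x)) = 0"
proof (induction n arbitrary: \<pi> rule: less_induct)
  case (less n)
  show ?case
  proof (cases "irreducible_rep G n \<pi>")
    case True thus ?thesis using irr by blast
  next
    case False
    show ?thesis
    proof (cases "n = 0")
      case True
      have "mat_trace (\<pi> x) = 0" if "x \<in> carrier G" for x
        using less.prems that True unfolding is_rep_def mat_trace_def by auto
      thus ?thesis by simp
    next
      case n0: False
      from False less.prems n0 obtain W where sub: "is_subspace n W"
        and inv: "\<forall>g\<in>carrier G. \<forall>w\<in>W. \<pi> g *\<^sub>v w \<in> W"
        and W0: "W \<noteq> {0\<^sub>v n}" and Wn: "W \<noteq> carrier_vec n"
        unfolding irreducible_rep_def by blast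
      from rep_split[OF less.prems sub inv W0 Wn] obtain k A C where
        k: "0 < k" "k < n" and A: "is_rep G k A" and C: "is_rep G (n-k) C"
        and tr: "\<forall>g\<in>carrier G. mat_trace (\<pi> g) = mat_trace (A g) + mat_trace (C g)"
        by blast
      have "(\<Sum>x\<in>carrier G. h x * mat_trace (\<pi> x)) =
            (\<Sum>x\<in>carrier G. h x * mat_trace (A x)) + (\<Sum>x\<in>carrier G. h x * mat_trace (C x))"
        using tr by (simp add: distrib_left sum.distrib)
      also have "\<dots> = 0" using less.IH[OF k(2) A] less.IH[of "n-k" C] C k by simp
      finally show ?thesis .
    qed
  qed
qed

lemma regular_rep_exists:
  fixes G :: "('a, 'b) monoid_scheme" (structure)
  assumes grp: "group G" and fin: "finite (carrier G)"
  shows "\<exists>\<pi>. is_rep G (card (carrier G)) \<pi> \<and>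
     (\<forall>x\<in>carrier G. mat_trace (\<pi> x) = (if x = \<one>\<^bsub>G\<^esub> then of_nat (card (carrier G)) else 0))"
proof -
  interpret group G by (rule grp)
  let ?N = "card (carrier G)"
  obtain e where e: "bij_betw e {0..<?N} (carrier G)" using ex_bij_betw_nat_finite[OF fin] by blast
  have ein: "e a \<in> carrier G" if "a < ?N" for a using e that unfolding bij_betw_def by auto
  have einj: "e a = e b \<longleftrightarrow> a = b" if "a < ?N" "b < ?N" for a b
    using e that unfolding bij_betw_def inj_on_def by auto
  have esurj: "\<exists>c<?N. e c = z" if "z \<in> carrier G" for z
    using e that unfolding bij_betw_def by force
  define \<pi> where "\<pi> = (\<lambda>x. mat ?N ?N (\<lambda>(a,b). if e a = x \<otimes> e b then 1 else (0::complex)))"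
  have single: "(\<Sum>c<?N. if e c = z then F c else 0) = F (SOME c. c < ?N \<and> e c = z)"
    if z: "z \<in> carrier G" for z and F :: "nat \<Rightarrow> complex"
  proof -
    obtain c0 where c0: "c0 < ?N" "e c0 = z" using esurj[OF z] by blast
    have sc: "(SOME c. c < ?N \<and> e c = z) = c0"
      using c0 einj by (intro some_equality) auto
    have "(\<Sum>c<?N. if e c = z then F c else 0) = (\<Sum>c<?N. if c = c0 then F c else 0)"
      using c0 einj by (intro sum.cong) auto
    also have "\<dots> = F c0" using c0 by simp
    finally show ?thesis using sc by simp
  qed
  have rep: "is_rep G ?N \<pi>"
    unfolding is_rep_def
  proof (intro conjI ballI)
    show "\<pi> \<one> = 1\<^sub>m ?N"
      unfolding \<pi>_def by (intro eq_matI) (auto simp: einj ein)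
  next
    fix x y assume x: "x \<in> carrier G" and y: "y \<in> carrier G"
    show "\<pi> (x \<otimes> y) = \<pi> x * \<pi> y"
    proof (intro eq_matI)
      fix a b assume a: "a < dim_row (\<pi> x * \<pi> y)" and b: "b < dim_col (\<pi> x * \<pi> y)"
      hence a: "a < ?N" and b: "b < ?N" unfolding \<pi>_def by auto
      have yb: "y \<otimes> e b \<in> carrier G" using y ein[OF b] by auto
      obtain c0 where c0: "c0 < ?N" "e c0 = y \<otimes> e b" using esurj[OF yb] by blast
      have ec: "(e c = y \<otimes> e b) = (c = c0)" if "c < ?N" for c
        using c0 einj[OF that c0(1)] by auto
      have "(\<pi> x * \<pi> y) $$ (a,b) =
          (\<Sum>c<?N. (if e a = x \<otimes> e c then 1 else 0) * (if e c = y \<otimes> e b then 1 else (0::complex)))"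
        using a b unfolding \<pi>_def by (auto simp: scalar_prod_def lessThan_atLeast0 intro!: sum.cong)
      also have "\<dots> = (\<Sum>c<?N. if c = c0 then (if e a = x \<otimes> e c then 1 else 0) else 0)"
        by (intro sum.cong) (auto simp: ec)
      also have "\<dots> = (if e a = x \<otimes> (y \<otimes> e b) then 1 else 0)" using c0 by simp
      also have "\<dots> = \<pi> (x \<otimes> y) $$ (a,b)"
        using a b x y ein[OF b] unfolding \<pi>_def by (simp add: m_assoc)
      finally show "\<pi> (x \<otimes> y) $$ (a,b) = (\<pi> x * \<pi> y) $$ (a,b)" by simp
    qed (auto simp: \<pi>_def)
  qed (auto simp: \<pi>_def)
  have "mat_trace (\<pi> x) = (if x = \<one> then of_nat ?N else 0)" if x: "x \<in> carrier G" for x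
  proof -
    have "mat_trace (\<pi> x) = (\<Sum>a<?N. if e a = x \<otimes> e a then 1 else 0)"
      unfolding mat_trace_def \<pi>_def by simp
    also have "\<dots> = (\<Sum>a<?N. if x = \<one> then 1 else 0)"
    proof (intro sum.cong refl)
      fix a assume "a \<in> {..<?N}"
      hence ea: "e a \<in> carrier G" using ein by auto
      have "e a = x \<otimes> e a \<longleftrightarrow> x = \<one>" using ea x by simp
      thus "(if e a = x \<otimes> e a then 1 else 0) = (if x = \<one> then 1 else (0::complex))" by simp
    qed
    finally show ?thesis by simp
  qed
  thus ?thesis using rep by blast
qed

lemma dim_count:
  fixes F :: "'x \<Rightarrow> 'i \<Rightarrow> complex"
  assumes finX: "finite X" and finI: "finite I"
    and indep: "\<And>f. (\<forall>j\<in>I. (\<Sum>x\<in>X. f x * F x j) = 0) \<Longrightarrow> (\<forall>x\<in>X. f x = 0)"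
  shows "card X \<le> card I"
proof (rule ccontr)
  assume "\<not> card X \<le> card I"
  hence lt: "card I < card X" by simp
  let ?p = "card X" and ?q = "card I"
  obtain ex where ex: "bij_betw ex {0..<?p} X" using ex_bij_betw_nat_finite[OF finX] by blast
  obtain ei where ei: "bij_betw ei {0..<?q} I" using ex_bij_betw_nat_finite[OF finI] by blast
  define c where "c = (\<lambda>r. vec ?p (\<lambda>col. if r < ?q then F (ex col) (ei r) else 0))"
  define B where "B = mat\<^sub>r ?p ?p (\<lambda>r. if r = ?q then 0\<^sub>v ?p else c r)"
  have Bc: "B \<in> carrier_mat ?p ?p" unfolding B_def by auto
  have "det B = 0" unfolding B_def by (rule det_row_0) (use lt in \<open>auto simp: c_def\<close>)
  then obtain v where v: "v \<in> carrier_vec ?p" "v \<noteq> 0\<^sub>v ?p" "B *\<^sub>v v = 0\<^sub>v ?p"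
    using det_0_iff_vec_prod_zero[OF Bc] by blast
  define f where "f = (\<lambda>x. v $ (the_inv_into {0..<?p} ex x))"
  have "\<forall>j\<in>I. (\<Sum>x\<in>X. f x * F x j) = 0"
  proof
    fix j assume j: "j \<in> I"
    then obtain r where r: "r < ?q" "ei r = j" using ei unfolding bij_betw_def by force
    have rp: "r < ?p" using r lt by simp
    have "(\<Sum>x\<in>X. f x * F x j) = (\<Sum>col\<in>{0..<?p}. f (ex col) * F (ex col) j)"
      using ex by (simp add: sum.reindex_bij_betw[symmetric])
    also have "\<dots> = (\<Sum>col\<in>{0..<?p}. v $ col * F (ex col) j)"
      using ex unfolding f_def bij_betw_def by (intro sum.cong) (auto simp: the_inv_into_f_f)
    also have "\<dots> = (B *\<^sub>v v) $ r"
      using rp r v(1) unfolding B_def c_def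
      by (auto simp: scalar_prod_def mult.commute intro!: sum.cong)
    also have "\<dots> = 0" using v(3) rp by simp
    finally show "(\<Sum>x\<in>X. f x * F x j) = 0" .
  qed
  hence f0: "\<forall>x\<in>X. f x = 0" by (rule indep)
  have "v = 0\<^sub>v ?p"
  proof (intro eq_vecI)
    fix i assume "i < dim_vec (0\<^sub>v ?p)"
    hence i: "i < ?p" by simp
    have "ex i \<in> X" using ex i unfolding bij_betw_def by auto
    hence "f (ex i) = 0" using f0 by blast
    moreover have "the_inv_into {0..<?p} ex (ex i) = i"
      using ex i unfolding bij_betw_def by (auto simp: the_inv_into_f_f)
    ultimately show "v $ i = 0\<^sub>v ?p $ i" using i unfolding f_def by simp
  qed (use v in auto)
  thus False using v by simp
qed


lemma char_one_deg:
  assumes "is_rep G n \<rho>" "group G"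
  shows "character_of G \<rho> \<one>\<^bsub>G\<^esub> = of_nat n"
  using assms unfolding character_of_def is_rep_def mat_trace_def
  by (simp add: group.is_monoid monoid.one_closed)

lemma conv_zero:
  fixes G :: "('a, 'b) monoid_scheme" (structure)
  assumes grp: "group G" and rep: "is_rep G d \<rho>"
    and f0: "\<And>a b. a < d \<Longrightarrow> b < d \<Longrightarrow> (\<Sum>x\<in>carrier G. f x * \<rho> x $$ (a,b)) = 0"
    and a: "a < d" and b: "b < d"
  shows "(\<Sum>x\<in>carrier G. (\<Sum>z\<in>carrier G. cnj (f z) * f (z \<otimes> x)) * \<rho> x $$ (a,b)) = 0"
proof -
  interpret group G by (rule grp)
  have inner: "(\<Sum>x\<in>carrier G. f (z \<otimes> x) * \<rho> x $$ (a,b)) = 0" if z: "z \<in> carrier G" for z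
  proof -
    have iz: "inv z \<in> carrier G" using z by simp
    have bij: "bij_betw (\<lambda>w. inv z \<otimes> w) (carrier G) (carrier G)"
      unfolding bij_betw_def using inj_on_cmult[OF iz] surj_const_mult[OF iz] by simp
    have "(\<Sum>x\<in>carrier G. f (z \<otimes> x) * \<rho> x $$ (a,b)) =
          (\<Sum>w\<in>carrier G. f (z \<otimes> (inv z \<otimes> w)) * \<rho> (inv z \<otimes> w) $$ (a,b))"
      using sum.reindex_bij_betw[OF bij, of "\<lambda>x. f (z \<otimes> x) * \<rho> x $$ (a,b)"] by simp
    also have "\<dots> = (\<Sum>w\<in>carrier G. f w * (\<Sum>c<d. \<rho> (inv z) $$ (a,c) * \<rho> w $$ (c,b)))"
    proof (intro sum.cong refl)
      fix w assume w: "w \<in> carrier G"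
      have zw: "z \<otimes> (inv z \<otimes> w) = w" using z w by (simp add: m_assoc[symmetric])
      have c1: "\<rho> (inv z) \<in> carrier_mat d d" "\<rho> w \<in> carrier_mat d d"
        using rep iz w unfolding is_rep_def by auto
      have "\<rho> (inv z \<otimes> w) = \<rho> (inv z) * \<rho> w" using rep iz w unfolding is_rep_def by auto
      hence "\<rho> (inv z \<otimes> w) $$ (a,b) = (\<Sum>c<d. \<rho> (inv z) $$ (a,c) * \<rho> w $$ (c,b))"
        using c1 a b by (auto simp: scalar_prod_def lessThan_atLeast0 intro!: sum.cong)
      thus "f (z \<otimes> (inv z \<otimes> w)) * \<rho> (inv z \<otimes> w) $$ (a,b) =
            f w * (\<Sum>c<d. \<rho> (inv z) $$ (a,c) * \<rho> w $$ (c,b))" using zw by simp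
    qed
    also have "\<dots> = (\<Sum>w\<in>carrier G. \<Sum>c<d. \<rho> (inv z) $$ (a,c) * (f w * \<rho> w $$ (c,b)))"
      by (simp add: sum_distrib_left mult.left_commute)
    also have "\<dots> = (\<Sum>c<d. \<Sum>w\<in>carrier G. \<rho> (inv z) $$ (a,c) * (f w * \<rho> w $$ (c,b)))"
      by (rule sum.swap)
    also have "\<dots> = (\<Sum>c<d. \<rho> (inv z) $$ (a,c) * (\<Sum>w\<in>carrier G. f w * \<rho> w $$ (c,b)))"
      by (simp add: sum_distrib_left)
    also have "\<dots> = 0" using f0 b by simp
    finally show ?thesis .
  qed
  have "(\<Sum>x\<in>carrier G. (\<Sum>z\<in>carrier G. cnj (f z) * f (z \<otimes> x)) * \<rho> x $$ (a,b)) =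
        (\<Sum>z\<in>carrier G. cnj (f z) * (\<Sum>x\<in>carrier G. f (z \<otimes> x) * \<rho> x $$ (a,b)))"
  proof -
    have "(\<Sum>x\<in>carrier G. (\<Sum>z\<in>carrier G. cnj (f z) * f (z \<otimes> x)) * \<rho> x $$ (a,b)) =
        (\<Sum>x\<in>carrier G. \<Sum>z\<in>carrier G. cnj (f z) * (f (z \<otimes> x) * \<rho> x $$ (a,b)))"
      by (simp add: sum_distrib_right mult.assoc)
    also have "\<dots> = (\<Sum>z\<in>carrier G. \<Sum>x\<in>carrier G. cnj (f z) * (f (z \<otimes> x) * \<rho> x $$ (a,b)))"
      by (rule sum.swap)
    also have "\<dots> = (\<Sum>z\<in>carrier G. cnj (f z) * (\<Sum>x\<in>carrier G. f (z \<otimes> x) * \<rho> x $$ (a,b)))"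
      by (simp add: sum_distrib_left)
    finally show ?thesis .
  qed
  also have "\<dots> = 0" using inner by simp
  finally show ?thesis .
qed


lemma degree_bound:
  fixes G :: "('a, 'b) monoid_scheme" (structure)
  assumes grp: "group G" and fin: "finite (carrier G)" and en: "enumerates_irr_chars G t \<phi>"
    and dr: "\<And>i. i < t \<Longrightarrow> irreducible_rep G (deg i) (rho i) \<and> \<phi> i = character_of G (rho i)"
  shows "card (carrier G) \<le> (\<Sum>i<t. deg i * deg i)"
proof -
  interpret group G by (rule grp)
  define I where "I = Sigma {..<t} (\<lambda>i. {..<deg i} \<times> {..<deg i})"
  have finI: "finite I" unfolding I_def by auto
  have cardI: "card I = (\<Sum>i<t. deg i * deg i)" unfolding I_def
    by (simp add: card_SigmaI card_cartesian_product)
  define F where "F = (\<lambda>x (j :: nat \<times> nat \<times> nat). case j of (i,a,b) \<Rightarrow> rho i x $$ (a,b))"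
  have "card (carrier G) \<le> card I"
  proof (rule dim_count[OF fin finI, of F])
    fix f :: "'a \<Rightarrow> complex"
    assume H: "\<forall>j\<in>I. (\<Sum>x\<in>carrier G. f x * F x j) = 0"
    define h where "h = (\<lambda>x. \<Sum>z\<in>carrier G. cnj (f z) * f (z \<otimes> x))"
    have irr: "(\<Sum>x\<in>carrier G. h x * mat_trace (\<sigma> x)) = 0" if irs: "irreducible_rep G n \<sigma>" for n \<sigma>
    proof -
      have "irr_char G (character_of G \<sigma>)" unfolding irr_char_def using irs by blast
      then obtain i where i: "i < t" "\<phi> i = character_of G \<sigma>"
        using en unfolding enumerates_irr_chars_def by (metis (mono_tags) imageE lessThan_iff mem_Collect_eq)
      have ri: "irreducible_rep G (deg i) (rho i)" and ci: "\<phi> i = character_of G (rho i)" using dr[OF i(1)] by auto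
      have repi: "is_rep G (deg i) (rho i)" using ri unfolding irreducible_rep_def by simp
      have "(\<Sum>x\<in>carrier G. h x * mat_trace (\<sigma> x)) = (\<Sum>x\<in>carrier G. h x * mat_trace (rho i x))"
      proof (intro sum.cong refl)
        fix x assume x: "x \<in> carrier G"
        have "mat_trace (\<sigma> x) = character_of G \<sigma> x" using x unfolding character_of_def by simp
        also have "\<dots> = character_of G (rho i) x" using i(2) ci by simp
        also have "\<dots> = mat_trace (rho i x)" using x unfolding character_of_def by simp
        finally show "h x * mat_trace (\<sigma> x) = h x * mat_trace (rho i x)" by simp
      qed
      also have "\<dots> = (\<Sum>x\<in>carrier G. \<Sum>a<deg i. h x * rho i x $$ (a,a))"
      proof (intro sum.cong refl)
        fix x assume x: "x \<in> carrier G"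
        have "rho i x \<in> carrier_mat (deg i) (deg i)" using repi x unfolding is_rep_def by auto
        thus "h x * mat_trace (rho i x) = (\<Sum>a<deg i. h x * rho i x $$ (a,a))"
          unfolding mat_trace_def by (simp add: sum_distrib_left)
      qed
      also have "\<dots> = (\<Sum>a<deg i. \<Sum>x\<in>carrier G. h x * rho i x $$ (a,a))" by (rule sum.swap)
      also have "\<dots> = 0"
      proof (rule sum.neutral, rule ballI)
        fix a assume a: "a \<in> {..<deg i}"
        have f0: "(\<Sum>x\<in>carrier G. f x * rho i x $$ (c,b)) = 0" if "c < deg i" "b < deg i" for c b
          using H that i(1) unfolding I_def F_def by auto
        have "(\<Sum>x\<in>carrier G. (\<Sum>z\<in>carrier G. cnj (f z) * f (z \<otimes> x)) * rho i x $$ (a,a)) = 0"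
          using conv_zero[OF grp repi f0] a by auto
        thus "(\<Sum>x\<in>carrier G. h x * rho i x $$ (a,a)) = 0" unfolding h_def .
      qed
      finally show ?thesis .
    qed
    obtain \<pi> where \<pi>: "is_rep G (card (carrier G)) \<pi>"
      and tr: "\<forall>x\<in>carrier G. mat_trace (\<pi> x) = (if x = \<one> then of_nat (card (carrier G)) else 0)"
      using regular_rep_exists[OF grp fin] by blast
    have "0 = (\<Sum>x\<in>carrier G. h x * mat_trace (\<pi> x))"
      using char_sum_zero[of G h, OF irr \<pi>] by simp
    also have "\<dots> = (\<Sum>x\<in>carrier G. if x = \<one> then h x * of_nat (card (carrier G)) else 0)"
      using tr by (intro sum.cong) auto
    also have "\<dots> = h \<one> * of_nat (card (carrier G))" using fin by (simp add: sum.delta)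
    finally have "h \<one> * of_nat (card (carrier G)) = 0" by simp
    moreover have "card (carrier G) \<noteq> 0" using fin one_closed by (metis card_0_eq empty_iff)
    ultimately have h1: "h \<one> = 0" by simp
    have "h \<one> = (\<Sum>z\<in>carrier G. complex_of_real ((cmod (f z))\<^sup>2))"
      unfolding h_def
    proof (intro sum.cong refl)
      fix z assume z: "z \<in> carrier G"
      have "cnj (f z) * f z = complex_of_real ((cmod (f z))\<^sup>2)"
        using complex_norm_square[of "f z"] by (simp only: mult.commute)
      thus "cnj (f z) * f (z \<otimes> \<one>) = complex_of_real ((cmod (f z))\<^sup>2)" using z by simp
    qed
    also have "\<dots> = complex_of_real (\<Sum>z\<in>carrier G. (cmod (f z))\<^sup>2)" by simp
    finally have "(\<Sum>z\<in>carrier G. (cmod (f z))\<^sup>2) = 0" using h1 by (metis of_real_eq_0_iff)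
    hence "\<forall>z\<in>carrier G. (cmod (f z))\<^sup>2 = 0" using fin by (subst (asm) sum_nonneg_eq_0_iff) auto
    thus "\<forall>x\<in>carrier G. f x = 0" by simp
  qed
  thus ?thesis using cardI by simp
qed


lemma card_fibers:
  assumes "finite X" "finite K"
  shows "card {x\<in>X. g x \<in> K} = (\<Sum>y\<in>K. card {x\<in>X. g x = y})"
proof -
  have "{x\<in>X. g x \<in> K} = (\<Union>y\<in>K. {x\<in>X. g x = y})" by auto
  moreover have "card (\<Union>y\<in>K. {x\<in>X. g x = y}) = (\<Sum>y\<in>K. card {x\<in>X. g x = y})"
    using assms by (intro card_UN_disjoint) auto
  ultimately show ?thesis by simp
qed

lemma sum_single_k:
  fixes c :: "nat \<Rightarrow> complex"
  assumes "k0 < t" "\<And>k. k < t \<Longrightarrow> (q \<in> S k) = (k = k0)"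
  shows "(\<Sum>k<t. c k * (if q \<in> S k then 1 else 0)) = c k0"
proof -
  have "(\<Sum>k<t. c k * (if q \<in> S k then 1 else 0)) = (\<Sum>k<t. if k = k0 then c k else 0)"
    using assms(2) by (intro sum.cong) auto
  also have "\<dots> = c k0" using assms(1) by simp
  finally show ?thesis .
qed

lemma pm_eq: "prod_mult m A B q = card {p \<in> A \<times> B. (\<lambda>(a,b). m a b) p = q}"
  unfolding prod_mult_def by (rule arg_cong[where f=card]) auto


lemma fwd_dir:
  fixes G :: "('a, 'b) monoid_scheme" and \<phi> :: "nat \<Rightarrow> 'a \<Rightarrow> complex"
    and Q :: "'q set" and m :: "'q \<Rightarrow> 'q \<Rightarrow> 'q"
  assumes en: "enumerates_irr_chars G t \<phi>" and qg: "quasigroup Q m" and finQ: "finite Q"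
    and dg: "\<And>i. i < t \<Longrightarrow> \<phi> i \<one>\<^bsub>G\<^esub> \<noteq> 0"
    and bal: "wcq_balanced_cover G t \<phi> Q m f"
  shows "\<exists>S :: nat \<Rightarrow> 'q set.
       (\<forall>i<t. S i \<subseteq> Q) \<and>
       (\<forall>i<t. \<forall>j<t. i \<noteq> j \<longrightarrow> S i \<inter> S j = {}) \<and>
       (\<forall>i<t. of_nat (card (S i)) = (\<phi> i \<one>\<^bsub>G\<^esub>)\<^sup>2) \<and>
       (\<forall>i<t. \<forall>j<t. \<forall>q. of_nat (prod_mult m (S i) (S j) q) =
          (\<Sum>k<t. (\<phi> i \<one>\<^bsub>G\<^esub> * \<phi> j \<one>\<^bsub>G\<^esub> *
                    char_scalar G (\<lambda>g. \<phi> i g * \<phi> j g) (\<phi> k) / \<phi> k \<one>\<^bsub>G\<^esub>)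
                  * (if q \<in> S k then 1 else 0)))"
proof -
  define S where "S = (\<lambda>i. {q\<in>Q. f q = \<phi> i})"
  have inj: "inj_on \<phi> {..<t}" using en unfolding enumerates_irr_chars_def by simp
  note bal' = bal[unfolded wcq_balanced_cover_def]
  note cov' = conjunct1[OF bal', unfolded wcq_cover_def]
  note cov = conjunct1[OF cov'] and wt = conjunct1[OF conjunct2[OF cov']]
    and al = conjunct2[OF conjunct2[OF cov']] and bl = conjunct2[OF bal']
  have mQ: "m a b \<in> Q" if "a \<in> Q" "b \<in> Q" for a b using qg that unfolding quasigroup_def by auto
  have SQ: "S i \<subseteq> Q" for i unfolding S_def by auto
  have finS: "finite (S i)" for i using finite_subset[OF SQ finQ] .
  have disj: "S i \<inter> S j = {}" if "i < t" "j < t" "i \<noteq> j" for i j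
    using inj that unfolding S_def inj_on_def by auto
  have card: "of_nat (card (S i)) = (\<phi> i \<one>\<^bsub>G\<^esub>)\<^sup>2" if "i < t" for i
    using wt that unfolding S_def wcq_weight_def by simp
  have prod: "of_nat (prod_mult m (S i) (S j) q) =
          (\<Sum>k<t. (\<phi> i \<one>\<^bsub>G\<^esub> * \<phi> j \<one>\<^bsub>G\<^esub> *
                    char_scalar G (\<lambda>g. \<phi> i g * \<phi> j g) (\<phi> k) / \<phi> k \<one>\<^bsub>G\<^esub>)
                  * (if q \<in> S k then 1 else 0))" if i: "i < t" and j: "j < t" for i j q
  proof (cases "q \<in> Q")
    case False
    have mm: "\<forall>a\<in>S i. \<forall>b\<in>S j. m a b \<in> Q" using SQ mQ by blast
    have "prod_mult m (S i) (S j) q = 0"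
      unfolding prod_mult_def using False mm by (auto simp: card_eq_0_iff)
    moreover have "q \<notin> S k" for k using False SQ by auto
    ultimately show ?thesis by simp
  next
    case True
    have "f q \<in> \<phi> ` {..<t}" using cov True by blast
    then obtain k0 where k0: "k0 < t" "f q = \<phi> k0" by auto
    have mem: "(q \<in> S k) = (k = k0)" if "k < t" for k
      using inj that k0 True unfolding S_def inj_on_def by auto
    define P where "P = prod_mult m (S i) (S j)"
    have Peq: "P q' = P q" if "q' \<in> S k0" for q'
    proof -
      have qQ: "q' \<in> Q" and fq: "f q' = f q" using that k0 unfolding S_def by auto
      have "card {(a,b) \<in> {x\<in>Q. f x = \<phi> i} \<times> {x\<in>Q. f x = \<phi> j}. m a b = q'}
          = card {(a,b) \<in> {x\<in>Q. f x = \<phi> i} \<times> {x\<in>Q. f x = \<phi> j}. m a b = q}"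
        using bl[rule_format, OF i j qQ True fq] .
      thus ?thesis unfolding P_def prod_mult_def S_def .
    qed
    have "{(a,b) \<in> {q\<in>Q. f q = \<phi> i} \<times> {q\<in>Q. f q = \<phi> j}. f (m a b) = \<phi> k0}
          = {p \<in> S i \<times> S j. (\<lambda>(a,b). m a b) p \<in> S k0}"
      unfolding S_def using mQ by auto
    hence "card {(a,b) \<in> {q\<in>Q. f q = \<phi> i} \<times> {q\<in>Q. f q = \<phi> j}. f (m a b) = \<phi> k0}
          = (\<Sum>q'\<in>S k0. P q')"
      using card_fibers[of "S i \<times> S j" "S k0" "\<lambda>(a,b). m a b"] finS unfolding P_def pm_eq by simp
    also have "\<dots> = (\<Sum>q'\<in>S k0. P q)" by (rule sum.cong[OF refl Peq])
    also have "\<dots> = card (S k0) * P q" by simp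
    finally have calc: "card {(a,b) \<in> {q\<in>Q. f q = \<phi> i} \<times> {q\<in>Q. f q = \<phi> j}. f (m a b) = \<phi> k0}
          = card (S k0) * P q" .
    have "of_nat (card (S k0) * P q) = wcq_alpha G (\<phi> i) (\<phi> j) (\<phi> k0)"
      using al[rule_format, OF i j k0(1)] unfolding calc .
    hence "(\<phi> k0 \<one>\<^bsub>G\<^esub>)\<^sup>2 * of_nat (P q) = \<phi> i \<one>\<^bsub>G\<^esub> * \<phi> j \<one>\<^bsub>G\<^esub> * \<phi> k0 \<one>\<^bsub>G\<^esub> *
        char_scalar G (\<lambda>g. \<phi> i g * \<phi> j g) (\<phi> k0)"
      using card[OF k0(1)] unfolding wcq_alpha_def by simp
    hence PP: "of_nat (P q) = \<phi> i \<one>\<^bsub>G\<^esub> * \<phi> j \<one>\<^bsub>G\<^esub> *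
        char_scalar G (\<lambda>g. \<phi> i g * \<phi> j g) (\<phi> k0) / \<phi> k0 \<one>\<^bsub>G\<^esub>"
      using dg[OF k0(1)] by (simp add: field_simps power2_eq_square)
    show ?thesis
      by (subst sum_single_k[OF k0(1) mem]) (assumption | rule PP[unfolded P_def])+
  qed
  show ?thesis
    by (rule exI[of _ S]) (use SQ disj card prod in auto)
qed


lemma bwd_dir:
  fixes G :: "('a, 'b) monoid_scheme" and \<phi> :: "nat \<Rightarrow> 'a \<Rightarrow> complex"
    and Q :: "'q set" and m :: "'q \<Rightarrow> 'q \<Rightarrow> 'q" and S :: "nat \<Rightarrow> 'q set"
  assumes en: "enumerates_irr_chars G t \<phi>" and qg: "quasigroup Q m" and finQ: "finite Q"
    and cQ: "card Q = card (carrier G)"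
    and dg: "\<And>i. i < t \<Longrightarrow> \<phi> i \<one>\<^bsub>G\<^esub> = of_nat (deg i) \<and> 0 < deg i"
    and bound: "card (carrier G) \<le> (\<Sum>i<t. deg i * deg i)"
    and SQ: "\<forall>i<t. S i \<subseteq> Q"
    and disj: "\<forall>i<t. \<forall>j<t. i \<noteq> j \<longrightarrow> S i \<inter> S j = {}"
    and cS: "\<forall>i<t. of_nat (card (S i)) = (\<phi> i \<one>\<^bsub>G\<^esub>)\<^sup>2"
    and pr: "\<forall>i<t. \<forall>j<t. \<forall>q. of_nat (prod_mult m (S i) (S j) q) =
          (\<Sum>k<t. (\<phi> i \<one>\<^bsub>G\<^esub> * \<phi> j \<one>\<^bsub>G\<^esub> *
                    char_scalar G (\<lambda>g. \<phi> i g * \<phi> j g) (\<phi> k) / \<phi> k \<one>\<^bsub>G\<^esub>)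
                  * (if q \<in> S k then 1 else 0))"
  shows "\<exists>f. wcq_balanced_cover G t \<phi> Q m f"
proof -
  define c where "c = (\<lambda>i j k. \<phi> i \<one>\<^bsub>G\<^esub> * \<phi> j \<one>\<^bsub>G\<^esub> *
                    char_scalar G (\<lambda>g. \<phi> i g * \<phi> j g) (\<phi> k) / \<phi> k \<one>\<^bsub>G\<^esub>)"
  have inj: "inj_on \<phi> {..<t}" using en unfolding enumerates_irr_chars_def by simp
  have mQ: "m a b \<in> Q" if "a \<in> Q" "b \<in> Q" for a b using qg that unfolding quasigroup_def by auto
  have finS: "finite (S i)" if "i < t" for i using SQ that finQ finite_subset by blast
  have cardS: "card (S i) = deg i * deg i" if i: "i < t" for i
  proof -
    have "(of_nat (card (S i)) :: complex) = of_nat (deg i * deg i)"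
      using cS i dg[OF i] by (simp add: power2_eq_square)
    thus ?thesis by (simp only: of_nat_eq_iff)
  qed
  define U where "U = (\<Union>i\<in>{..<t}. S i)"
  have UQ: "U \<subseteq> Q" unfolding U_def using SQ by auto
  have "card U = (\<Sum>i<t. card (S i))" unfolding U_def
    using finS disj by (intro card_UN_disjoint) auto
  also have "\<dots> = (\<Sum>i<t. deg i * deg i)" using cardS by simp
  finally have "card Q \<le> card U" using bound cQ by simp
  hence UQe: "U = Q" using card_seteq[OF finQ UQ] by simp
  have ex: "\<exists>i<t. q \<in> S i" if "q \<in> Q" for q using that UQe unfolding U_def by auto
  have uniq: "i = i'" if "i < t" "i' < t" "q \<in> S i" "q \<in> S i'" for i i' q
    using disj that by blast
  define idx where "idx = (\<lambda>q. SOME i. i < t \<and> q \<in> S i)"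
  have idx: "idx q < t \<and> q \<in> S (idx q)" if "q \<in> Q" for q
    unfolding idx_def using someI_ex[OF ex[OF that]] by blast
  have idx2: "idx q = i" if "i < t" "q \<in> S i" for i q
  proof -
    have "q \<in> Q" using that SQ by auto
    thus ?thesis using idx uniq that by blast
  qed
  define f where "f = (\<lambda>q. \<phi> (idx q))"
  have fib: "{q\<in>Q. f q = \<phi> i} = S i" if i: "i < t" for i
  proof
    show "{q\<in>Q. f q = \<phi> i} \<subseteq> S i"
    proof
      fix q assume "q \<in> {q\<in>Q. f q = \<phi> i}"
      hence q: "q \<in> Q" "\<phi> (idx q) = \<phi> i" unfolding f_def by auto
      hence "idx q = i" using inj idx[OF q(1)] i unfolding inj_on_def by auto
      thus "q \<in> S i" using idx[OF q(1)] by simp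
    qed
    show "S i \<subseteq> {q\<in>Q. f q = \<phi> i}" using idx2 i SQ unfolding f_def by auto
  qed
  have mem: "(q \<in> S k') = (k' = k)" if "k < t" "q \<in> S k" "k' < t" for q k k'
    using uniq that by blast
  have prk: "of_nat (prod_mult m (S i) (S j) q) = c i j k" if "i < t" "j < t" "k < t" "q \<in> S k" for i j k q
  proof -
    have "of_nat (prod_mult m (S i) (S j) q) = (\<Sum>k'<t. c i j k' * (if q \<in> S k' then 1 else 0))"
      using pr[rule_format, OF that(1) that(2), of q] unfolding c_def .
    also have "\<dots> = c i j k" by (rule sum_single_k[OF that(3)], rule mem[OF that(3) that(4)])
    finally show ?thesis .
  qed
  have cov: "f ` Q = \<phi> ` {..<t}"
  proof
    show "f ` Q \<subseteq> \<phi> ` {..<t}" unfolding f_def using idx by auto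
    show "\<phi> ` {..<t} \<subseteq> f ` Q"
    proof
      fix x assume "x \<in> \<phi> ` {..<t}"
      then obtain i where i: "i < t" "x = \<phi> i" by auto
      have "card (S i) > 0" using cardS[OF i(1)] dg[OF i(1)] by simp
      then obtain q where "q \<in> S i" by (metis card_gt_0_iff ex_in_conv)
      hence "q \<in> Q" "f q = \<phi> i" using fib[OF i(1)] by blast+
      thus "x \<in> f ` Q" using i(2) by (metis image_eqI)
    qed
  qed
  have wt: "\<forall>i<t. of_nat (card {q\<in>Q. f q = \<phi> i}) = wcq_weight G (\<phi> i)"
    using fib cS unfolding wcq_weight_def by simp
  have al: "of_nat (card {(a,b) \<in> {q\<in>Q. f q = \<phi> i} \<times> {q\<in>Q. f q = \<phi> j}. f (m a b) = \<phi> k})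
          = wcq_alpha G (\<phi> i) (\<phi> j) (\<phi> k)" if i: "i < t" and j: "j < t" and k: "k < t" for i j k
  proof -
    have "{(a,b) \<in> {q\<in>Q. f q = \<phi> i} \<times> {q\<in>Q. f q = \<phi> j}. f (m a b) = \<phi> k}
          = {p \<in> S i \<times> S j. (\<lambda>(a,b). m a b) p \<in> S k}"
    proof -
      have "\<And>a b. a \<in> S i \<Longrightarrow> b \<in> S j \<Longrightarrow> (f (m a b) = \<phi> k) = (m a b \<in> S k)"
        using fib[OF k] mQ SQ i j by blast
      thus ?thesis unfolding fib[OF i] fib[OF j] by auto
    qed
    hence "card {(a,b) \<in> {q\<in>Q. f q = \<phi> i} \<times> {q\<in>Q. f q = \<phi> j}. f (m a b) = \<phi> k}
          = (\<Sum>q\<in>S k. prod_mult m (S i) (S j) q)"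
      using card_fibers[of "S i \<times> S j" "S k" "\<lambda>(a,b). m a b"] finS i j k unfolding pm_eq by simp
    hence "of_nat (card {(a,b) \<in> {q\<in>Q. f q = \<phi> i} \<times> {q\<in>Q. f q = \<phi> j}. f (m a b) = \<phi> k})
          = (\<Sum>q\<in>S k. (of_nat (prod_mult m (S i) (S j) q) :: complex))" by simp
    also have "\<dots> = (\<Sum>q\<in>S k. c i j k)" using prk i j k by (intro sum.cong) auto
    also have "\<dots> = of_nat (card (S k)) * c i j k" by simp
    also have "\<dots> = wcq_alpha G (\<phi> i) (\<phi> j) (\<phi> k)"
      using cS k dg[OF k] unfolding wcq_alpha_def c_def by (simp add: field_simps power2_eq_square)
    finally show ?thesis .
  qed
  have bl: "card {(a,b) \<in> {x\<in>Q. f x = \<phi> i} \<times> {x\<in>Q. f x = \<phi> j}. m a b = q}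
        = card {(a,b) \<in> {x\<in>Q. f x = \<phi> i} \<times> {x\<in>Q. f x = \<phi> j}. m a b = q'}"
    if i: "i < t" and j: "j < t" and q: "q \<in> Q" and q': "q' \<in> Q" and ff: "f q = f q'" for i j q q'
  proof -
    have "idx q = idx q'" using ff inj idx[OF q] idx[OF q'] unfolding f_def inj_on_def by auto
    hence "(of_nat (prod_mult m (S i) (S j) q) :: complex) = of_nat (prod_mult m (S i) (S j) q')"
      using prk[OF i j _ conjunct2[OF idx[OF q]]] prk[OF i j _ conjunct2[OF idx[OF q']]] idx[OF q] by simp
    hence "prod_mult m (S i) (S j) q = prod_mult m (S i) (S j) q'" by (simp only: of_nat_eq_iff)
    thus ?thesis unfolding prod_mult_def fib[OF i] fib[OF j] .
  qed
  have "wcq_balanced_cover G t \<phi> Q m f"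
    unfolding wcq_balanced_cover_def wcq_cover_def
    using cov wt al bl by blast
  thus ?thesis by blast
qed


theorem mainTheorem3:
  fixes G :: "('a, 'b) monoid_scheme"
    and t :: nat and \<phi> :: "nat \<Rightarrow> 'a \<Rightarrow> complex"
    and Q :: "'q set" and m :: "'q \<Rightarrow> 'q \<Rightarrow> 'q"
  assumes "group G" and "finite (carrier G)"
    and "enumerates_irr_chars G t \<phi>"
    and "quasigroup Q m" and "finite Q" and "card Q = card (carrier G)"
  shows "(\<exists>f. wcq_balanced_cover G t \<phi> Q m f) \<longleftrightarrow>
    (\<exists>S :: nat \<Rightarrow> 'q set.
       (\<forall>i<t. S i \<subseteq> Q) \<and>
       (\<forall>i<t. \<forall>j<t. i \<noteq> j \<longrightarrow> S i \<inter> S j = {}) \<and>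
       (\<forall>i<t. of_nat (card (S i)) = (\<phi> i \<one>\<^bsub>G\<^esub>)\<^sup>2) \<and>
       (\<forall>i<t. \<forall>j<t. \<forall>q. of_nat (prod_mult m (S i) (S j) q) =
          (\<Sum>k<t. (\<phi> i \<one>\<^bsub>G\<^esub> * \<phi> j \<one>\<^bsub>G\<^esub> *
                    char_scalar G (\<lambda>g. \<phi> i g * \<phi> j g) (\<phi> k) / \<phi> k \<one>\<^bsub>G\<^esub>)
                  * (if q \<in> S k then 1 else 0))))"
proof -
  note grp = assms(1) and fin = assms(2) and en = assms(3) and qg = assms(4)
    and finQ = assms(5) and cQ = assms(6)
  have "\<forall>i. \<exists>p. i < t \<longrightarrow> irreducible_rep G (fst p) (snd p) \<and> \<phi> i = character_of G (snd p)"
  proof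
    fix i
    show "\<exists>p. i < t \<longrightarrow> irreducible_rep G (fst p) (snd p) \<and> \<phi> i = character_of G (snd p)"
    proof (cases "i < t")
      case True
      hence "\<phi> i \<in> {\<chi>. irr_char G \<chi>}" using en unfolding enumerates_irr_chars_def by blast
      then obtain n \<rho> where "irreducible_rep G n \<rho>" "\<phi> i = character_of G \<rho>"
        unfolding irr_char_def by blast
      thus ?thesis by (intro exI[of _ "(n, \<rho>)"]) simp
    qed simp
  qed
  from choice[OF this] obtain P where
    P: "\<And>i. i < t \<Longrightarrow> irreducible_rep G (fst (P i)) (snd (P i)) \<and> \<phi> i = character_of G (snd (P i))"
    by blast
  define deg where "deg = (\<lambda>i. fst (P i))"
  define rho where "rho = (\<lambda>i. snd (P i))"
  have dr: "\<And>i. i < t \<Longrightarrow> irreducible_rep G (deg i) (rho i) \<and> \<phi> i = character_of G (rho i)"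
    using P unfolding deg_def rho_def by blast
  have dg: "\<phi> i \<one>\<^bsub>G\<^esub> = of_nat (deg i) \<and> 0 < deg i" if i: "i < t" for i
  proof -
    have "is_rep G (deg i) (rho i)" "0 < deg i" using dr[OF i] unfolding irreducible_rep_def by auto
    thus ?thesis using char_one_deg[of G "deg i" "rho i", OF _ grp] dr[OF i] by simp
  qed
  have bound: "card (carrier G) \<le> (\<Sum>i<t. deg i * deg i)"
    by (rule degree_bound[OF grp fin en dr])
  have dg0: "\<phi> i \<one>\<^bsub>G\<^esub> \<noteq> 0" if "i < t" for i using dg[OF that] by simp
  show ?thesis
  proof
    assume "\<exists>f. wcq_balanced_cover G t \<phi> Q m f"
    then obtain f where bc: "wcq_balanced_cover G t \<phi> Q m f" by blast
    show "\<exists>S :: nat \<Rightarrow> 'q set.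
       (\<forall>i<t. S i \<subseteq> Q) \<and>
       (\<forall>i<t. \<forall>j<t. i \<noteq> j \<longrightarrow> S i \<inter> S j = {}) \<and>
       (\<forall>i<t. of_nat (card (S i)) = (\<phi> i \<one>\<^bsub>G\<^esub>)\<^sup>2) \<and>
       (\<forall>i<t. \<forall>j<t. \<forall>q. of_nat (prod_mult m (S i) (S j) q) =
          (\<Sum>k<t. (\<phi> i \<one>\<^bsub>G\<^esub> * \<phi> j \<one>\<^bsub>G\<^esub> *
                    char_scalar G (\<lambda>g. \<phi> i g * \<phi> j g) (\<phi> k) / \<phi> k \<one>\<^bsub>G\<^esub>)
                  * (if q \<in> S k then 1 else 0)))"
      by (rule fwd_dir[OF en qg finQ]) (use dg0 bc in auto)
  next
    assume "\<exists>S :: nat \<Rightarrow> 'q set.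
       (\<forall>i<t. S i \<subseteq> Q) \<and>
       (\<forall>i<t. \<forall>j<t. i \<noteq> j \<longrightarrow> S i \<inter> S j = {}) \<and>
       (\<forall>i<t. of_nat (card (S i)) = (\<phi> i \<one>\<^bsub>G\<^esub>)\<^sup>2) \<and>
       (\<forall>i<t. \<forall>j<t. \<forall>q. of_nat (prod_mult m (S i) (S j) q) =
          (\<Sum>k<t. (\<phi> i \<one>\<^bsub>G\<^esub> * \<phi> j \<one>\<^bsub>G\<^esub> *
                    char_scalar G (\<lambda>g. \<phi> i g * \<phi> j g) (\<phi> k) / \<phi> k \<one>\<^bsub>G\<^esub>)
                  * (if q \<in> S k then 1 else 0)))"
    then obtain S :: "nat \<Rightarrow> 'q set" where SQ: "\<forall>i<t. S i \<subseteq> Q"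
      and disj: "\<forall>i<t. \<forall>j<t. i \<noteq> j \<longrightarrow> S i \<inter> S j = {}"
      and cS: "\<forall>i<t. of_nat (card (S i)) = (\<phi> i \<one>\<^bsub>G\<^esub>)\<^sup>2"
      and pr: "\<forall>i<t. \<forall>j<t. \<forall>q. of_nat (prod_mult m (S i) (S j) q) =
          (\<Sum>k<t. (\<phi> i \<one>\<^bsub>G\<^esub> * \<phi> j \<one>\<^bsub>G\<^esub> *
                    char_scalar G (\<lambda>g. \<phi> i g * \<phi> j g) (\<phi> k) / \<phi> k \<one>\<^bsub>G\<^esub>)
                  * (if q \<in> S k then 1 else 0))"
      by (elim exE conjE)
    show "\<exists>f. wcq_balanced_cover G t \<phi> Q m f"
      by (rule bwd_dir[OF en qg finQ cQ]) (use dg bound SQ disj cS pr in auto)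
  qed
qed

end
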